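(* Let $|N|=n$, let $i\in N$ and $S\subset N\setminus\{i\}$, and let $\chi_{(S,S\cup\{i\})}\in\ell^2(E)$ be the indicator function equal to $1$ on the edge $(S,S\cup\{i\})$ and $0$ on all other edges. If $u\in\ell^2(V)$ satisfies $\mathrm{d}u = P\chi_{(S,S\cup\{i\})}$ and $u(\emptyset)=0$, then $$u(N)=\frac{|S|!\,(n-1-|S|)!}{n!}.$$
   Context: Let $N$ be a finite set of players. The hypercube graph $G=(V,E)$ has vertex set $V=2^N$ and oriented edge set $E=\{(S,S\cup\{i\}) : i\in N,\ S\subset N\setminus\{i\}\}$. $\ell^2(V)$ is the space of real functions on $V$, and $\ell^2(E)$ is the space of real functions on $E$ with inner product $\langle f,g\rangle=\sum_{e\in E}f(e)g(e)$. The operator $\mathrm{d}\colon \ell^2(V)\to\ell^2(E)$ is $\mathrm{d}u(S,S\cup\{i\}) = u(S\cup\{i\})-u(S)$, with range $\mathcal{R}(\mathrm{d})$. $P\colon\ell^2(E)\to\ell^2(E)$ is the orthogonal projection onto $\mathcal{R}(\mathrm{d})$. *)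

theory Defs
  imports Complex_Main
begin

definition hedges :: "'a set \<Rightarrow> ('a set \<times> 'a set) set" where
  "hedges N = {(S, insert i S) | i S. i \<in> N \<and> S \<subseteq> N - {i}}"

text \<open>Elements of l2(E) are represented as functions on pairs of sets, zero outside E.
  The operator d: l2(V) to l2(E).\<close>
definition dgrad :: "'a set \<Rightarrow> ('a set \<Rightarrow> real) \<Rightarrow> ('a set \<times> 'a set \<Rightarrow> real)" where
  "dgrad N u = (\<lambda>e. if e \<in> hedges N then u (snd e) - u (fst e) else 0)"

definition innerE :: "'a set \<Rightarrow> ('a set \<times> 'a set \<Rightarrow> real) \<Rightarrow> ('a set \<times> 'a set \<Rightarrow> real) \<Rightarrow> real" where
  "innerE N f g = (\<Sum>e\<in>hedges N. f e * g e)"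

definition range_d :: "'a set \<Rightarrow> ('a set \<times> 'a set \<Rightarrow> real) set" where
  "range_d N = {dgrad N u | u. True}"

definition projP :: "'a set \<Rightarrow> ('a set \<times> 'a set \<Rightarrow> real) \<Rightarrow> ('a set \<times> 'a set \<Rightarrow> real)" where
  "projP N f = (THE g. g \<in> range_d N \<and> (\<forall>h\<in>range_d N. innerE N (\<lambda>e. f e - g e) h = 0))"

definition edge_ind :: "'a set \<times> 'a set \<Rightarrow> ('a set \<times> 'a set \<Rightarrow> real)" where
  "edge_ind e0 = (\<lambda>e. if e = e0 then 1 else 0)"

end

theory Submission imports Defs begin

lemma finite_hedges: "finite N \<Longrightarrow> finite (hedges N)"
proof -
  assume "finite N"
  have "hedges N \<subseteq> Pow N \<times> Pow N" unfolding hedges_def by auto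
  thus ?thesis using \<open>finite N\<close> by (meson finite_Pow_iff finite_SigmaI finite_subset)
qed

lemma innerE_diff_left: "innerE N (\<lambda>x. f x - g x) h = innerE N f h - innerE N g h"
  unfolding innerE_def by (simp add: left_diff_distrib sum_subtractf)
lemma innerE_add_left: "innerE N (\<lambda>x. f x + g x) h = innerE N f h + innerE N g h"
  unfolding innerE_def by (simp add: distrib_right sum.distrib)
lemma innerE_diff_right: "innerE N h (\<lambda>x. f x - g x) = innerE N h f - innerE N h g"
  unfolding innerE_def by (simp add: right_diff_distrib sum_subtractf)
lemma innerE_add_right: "innerE N h (\<lambda>x. f x + g x) = innerE N h f + innerE N h g"
  unfolding innerE_def by (simp add: distrib_left sum.distrib)
lemma innerE_scale_left: "innerE N (\<lambda>x. c * f x) h = c * innerE N f h"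
  unfolding innerE_def by (simp add: sum_distrib_left mult.assoc)
lemma innerE_scale_right: "innerE N h (\<lambda>x. c * f x) = c * innerE N h f"
  unfolding innerE_def by (simp add: sum_distrib_left mult.left_commute)
lemma innerE_comm: "innerE N f g = innerE N g f"
  unfolding innerE_def by (simp add: mult.commute)

lemma innerE_self_zero:
  assumes "finite N" "innerE N f f = 0" "e \<in> hedges N" shows "f e = 0"
proof -
  have "\<forall>x\<in>hedges N. f x * f x = 0"
    using assms finite_hedges[OF assms(1)] unfolding innerE_def
    by (subst sum_nonneg_eq_0_iff[symmetric]) auto
  thus ?thesis using assms(3) by auto
qed

lemma innerE_vanish: "(\<And>e. e \<in> hedges N \<Longrightarrow> f e = 0) \<Longrightarrow> innerE N g f = 0"
  unfolding innerE_def by simp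

definition RW :: "'a set \<Rightarrow> 'a set set \<Rightarrow> ('a set \<times> 'a set \<Rightarrow> real) set" where
  "RW N W = {dgrad N u | u. \<forall>T. T \<notin> W \<longrightarrow> u T = 0}"

lemma dgrad_zero: "dgrad N (\<lambda>_. 0) = (\<lambda>_. 0)"
  unfolding dgrad_def by auto

lemma proj_exists_RW:
  assumes "finite W" "finite N"
  shows "\<forall>f. \<exists>g\<in>RW N W. \<forall>h\<in>RW N W. innerE N (\<lambda>e. f e - g e) h = 0"
  using assms(1)
proof (induction W rule: finite_induct)
  case empty
  have "RW N {} = {\<lambda>_. 0}"
  proof
    show "RW N {} \<subseteq> {\<lambda>_. 0}" unfolding RW_def dgrad_def by auto
    have "dgrad N (\<lambda>_. 0) \<in> RW N {}" unfolding RW_def by blast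
    then show "{\<lambda>_. 0} \<subseteq> RW N {}" using dgrad_zero[of N] by simp
  qed
  then show ?case unfolding innerE_def by auto
next
  case (insert T W)
  define \<delta> where "\<delta> = (\<lambda>X::'a set. if X = T then (1::real) else 0)"
  define e where "e = dgrad N \<delta>"
  obtain p where pW: "p \<in> RW N W" and po: "\<forall>h\<in>RW N W. innerE N (\<lambda>x. e x - p x) h = 0"
    using insert.IH by blast
  obtain up where up: "p = dgrad N up" "\<forall>X. X \<notin> W \<longrightarrow> up X = 0" using pW unfolding RW_def by auto
  show ?case
  proof
    fix f :: "'a set \<times> 'a set \<Rightarrow> real"
    obtain g' where gW: "g' \<in> RW N W" and go: "\<forall>h\<in>RW N W. innerE N (\<lambda>x. f x - g' x) h = 0"
      using insert.IH by blast
    obtain ug where ug: "g' = dgrad N ug" "\<forall>X. X \<notin> W \<longrightarrow> ug X = 0" using gW unfolding RW_def by auto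
    define e' where "e' = (\<lambda>x. e x - p x)"
    define r' where "r' = (\<lambda>x. f x - g' x)"
    define c where "c = innerE N r' e' / innerE N e' e'"
    define g where "g = (\<lambda>x. g' x + c * e' x)"
    have key: "innerE N r' e' - c * innerE N e' e' = 0"
    proof (cases "innerE N e' e' = 0")
      case True
      have "innerE N r' e' = 0"
        by (rule innerE_vanish) (use innerE_self_zero[OF assms(2) True] in auto)
      then show ?thesis using True by simp
    next
      case False then show ?thesis unfolding c_def by simp
    qed
    have gdef: "g = dgrad N (\<lambda>X. ug X + c * \<delta> X - c * up X)"
      unfolding g_def e'_def e_def ug up dgrad_def by (auto simp: algebra_simps)
    have "g \<in> RW N (insert T W)"
      unfolding RW_def gdef using ug(2) up(2)
      by (intro CollectI exI[of _ "\<lambda>X. ug X + c * \<delta> X - c * up X"]) (auto simp: \<delta>_def)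
    moreover have "\<forall>h\<in>RW N (insert T W). innerE N (\<lambda>x. f x - g x) h = 0"
    proof
      fix h assume "h \<in> RW N (insert T W)"
      then obtain v where v: "h = dgrad N v" "\<forall>X. X \<notin> insert T W \<longrightarrow> v X = 0"
        unfolding RW_def by auto
      define v' where "v' = (\<lambda>X. v X - v T * \<delta> X)"
      have hW: "dgrad N v' \<in> RW N W" unfolding RW_def v'_def using v(2)
        by (intro CollectI exI[of _ "v'"]) (auto simp: \<delta>_def v'_def)
      have hdec: "h = (\<lambda>x. dgrad N v' x + v T * e x)"
        unfolding v v'_def e_def dgrad_def by (auto simp: algebra_simps)
      have r: "(\<lambda>x. f x - g x) = (\<lambda>x. r' x - c * e' x)"
        unfolding g_def r'_def by (auto simp: algebra_simps)
      have A: "innerE N r' (dgrad N v') = 0" using go hW unfolding r'_def by blast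
      have B: "innerE N e' (dgrad N v') = 0" using po hW unfolding e'_def by blast
      have C: "innerE N r' p = 0" using go pW unfolding r'_def by blast
      have D: "innerE N e' p = 0" using po pW unfolding e'_def by blast
      have E: "e = (\<lambda>x. e' x + p x)" unfolding e'_def by auto
      show "innerE N (\<lambda>x. f x - g x) h = 0"
        unfolding r hdec
        apply (simp only: innerE_add_right innerE_scale_right innerE_diff_left innerE_scale_left A B)
        apply (simp only: E)
        apply (simp only: innerE_add_right innerE_diff_left innerE_scale_left C D)
        using key by simp
    qed
    ultimately show "\<exists>g\<in>RW N (insert T W). \<forall>h\<in>RW N (insert T W). innerE N (\<lambda>x. f x - g x) h = 0"
      by blast
  qed
qed

lemma hedges_Pow: "e \<in> hedges N \<Longrightarrow> fst e \<in> Pow N \<and> snd e \<in> Pow N"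
  unfolding hedges_def by auto

lemma RW_Pow: "RW N (Pow N) = range_d N"
proof
  show "RW N (Pow N) \<subseteq> range_d N" unfolding RW_def range_d_def by auto
  show "range_d N \<subseteq> RW N (Pow N)"
  proof
    fix g assume "g \<in> range_d N"
    then obtain u where u: "g = dgrad N u" unfolding range_d_def by auto
    have "g = dgrad N (\<lambda>X. if X \<in> Pow N then u X else 0)"
      unfolding u dgrad_def using hedges_Pow by fastforce
    then show "g \<in> RW N (Pow N)" unfolding RW_def by (intro CollectI exI[of _ "\<lambda>X. if X \<in> Pow N then u X else 0"]) auto
  qed
qed

lemma projP_prop:
  assumes "finite N"
  shows "projP N f \<in> range_d N \<and> (\<forall>h\<in>range_d N. innerE N (\<lambda>e. f e - projP N f e) h = 0)"
proof -
  define Q where "Q = (\<lambda>g. g \<in> range_d N \<and> (\<forall>h\<in>range_d N. innerE N (\<lambda>e. f e - g e) h = 0))"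
  have ex: "\<exists>!g. g \<in> range_d N \<and> (\<forall>h\<in>range_d N. innerE N (\<lambda>e. f e - g e) h = 0)"
  proof (rule ex_ex1I)
    show "\<exists>g. g \<in> range_d N \<and> (\<forall>h\<in>range_d N. innerE N (\<lambda>e. f e - g e) h = 0)"
    proof -
      have "\<forall>f. \<exists>g\<in>range_d N. \<forall>h\<in>range_d N. innerE N (\<lambda>e. f e - g e) h = 0"
        using proj_exists_RW[of "Pow N" N] assms RW_Pow[of N] by simp
      then obtain g where "g\<in>range_d N" "\<forall>h\<in>range_d N. innerE N (\<lambda>e. f e - g e) h = 0" by blast
      then show ?thesis by blast
    qed
  next
    fix g1 g2
    assume 1: "g1 \<in> range_d N \<and> (\<forall>h\<in>range_d N. innerE N (\<lambda>e. f e - g1 e) h = 0)"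
       and 2: "g2 \<in> range_d N \<and> (\<forall>h\<in>range_d N. innerE N (\<lambda>e. f e - g2 e) h = 0)"
    obtain u1 where u1: "g1 = dgrad N u1" using 1 unfolding range_d_def by auto
    obtain u2 where u2: "g2 = dgrad N u2" using 2 unfolding range_d_def by auto
    define h where "h = dgrad N (\<lambda>X. u1 X - u2 X)"
    have hh: "h = (\<lambda>x. g1 x - g2 x)" unfolding h_def u1 u2 dgrad_def by auto
    have hr: "h \<in> range_d N" unfolding h_def range_d_def by auto
    have "innerE N (\<lambda>e. f e - g2 e) h - innerE N (\<lambda>e. f e - g1 e) h = 0" using 1 2 hr by simp
    hence "innerE N (\<lambda>x. g1 x - g2 x) h = 0" by (simp add: innerE_diff_left)
    hence "innerE N h h = 0" using hh by simp
    hence z: "\<And>e. e \<in> hedges N \<Longrightarrow> g1 e = g2 e" using innerE_self_zero[OF assms] hh by fastforce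
    show "g1 = g2"
    proof
      fix x show "g1 x = g2 x"
        using z[of x] unfolding u1 u2 dgrad_def by (cases "x \<in> hedges N") auto
    qed
  qed
  have "Q (THE g. Q g)" using theI'[of Q] ex unfolding Q_def by blast
  then show ?thesis unfolding Q_def projP_def by simp
qed


lemma hedges_img2: "hedges N = (\<lambda>(T,j). (T, insert j T)) ` Sigma (Pow N) (\<lambda>T. N - T)"
  unfolding hedges_def by (auto simp: image_iff)

lemma hedges_img1: "hedges N = (\<lambda>(T,j). (T - {j}, T)) ` Sigma (Pow N) (\<lambda>T. T)"
proof
  show "hedges N \<subseteq> (\<lambda>(T,j). (T - {j}, T)) ` Sigma (Pow N) (\<lambda>T. T)"
  proof
    fix e assume "e \<in> hedges N"
    then obtain i S where "e = (S, insert i S)" "i \<in> N" "S \<subseteq> N - {i}" unfolding hedges_def by auto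
    then show "e \<in> (\<lambda>(T,j). (T - {j}, T)) ` Sigma (Pow N) (\<lambda>T. T)"
      by (intro image_eqI[of _ _ "(insert i S, i)"]) auto
  qed
  show "(\<lambda>(T,j). (T - {j}, T)) ` Sigma (Pow N) (\<lambda>T. T) \<subseteq> hedges N"
  proof
    fix e assume "e \<in> (\<lambda>(T,j). (T - {j}, T)) ` Sigma (Pow N) (\<lambda>T. T)"
    then obtain T j where "e = (T - {j}, T)" "T \<subseteq> N" "j \<in> T" by auto
    then show "e \<in> hedges N" unfolding hedges_def
      by (intro CollectI exI[of _ j] exI[of _ "T - {j}"]) auto
  qed
qed

lemma sum_hedges2: "finite N \<Longrightarrow> sum F (hedges N) = (\<Sum>T\<in>Pow N. \<Sum>j\<in>N - T. F (T, insert j T))"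
proof -
  assume fN: "finite N"
  have inj: "inj_on (\<lambda>(T,j). (T, insert j T)) (Sigma (Pow N) (\<lambda>T. N - T))"
    by (auto simp: inj_on_def)
  have "sum F (hedges N) = sum (F \<circ> (\<lambda>(T,j). (T, insert j T))) (Sigma (Pow N) (\<lambda>T. N - T))"
    unfolding hedges_img2 by (rule sum.reindex[OF inj])
  also have "\<dots> = (\<Sum>T\<in>Pow N. \<Sum>j\<in>N - T. F (T, insert j T))"
    using fN by (subst sum.Sigma) (auto simp: comp_def split_def)
  finally show ?thesis .
qed

lemma sum_hedges1: "finite N \<Longrightarrow> sum F (hedges N) = (\<Sum>T\<in>Pow N. \<Sum>j\<in>T. F (T - {j}, T))"
proof -
  assume fN: "finite N"
  have inj: "inj_on (\<lambda>(T,j). (T - {j}, T)) (Sigma (Pow N) (\<lambda>T. T))"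
    by (auto simp: inj_on_def)
  have "sum F (hedges N) = sum (F \<circ> (\<lambda>(T,j). (T - {j}, T))) (Sigma (Pow N) (\<lambda>T. T))"
    unfolding hedges_img1 by (rule sum.reindex[OF inj])
  also have "\<dots> = (\<Sum>T\<in>Pow N. \<Sum>j\<in>T. F (T - {j}, T))"
    using fN by (subst sum.Sigma) (auto simp: comp_def split_def intro: finite_subset)
  finally show ?thesis .
qed


lemma dgrad_phi:
  assumes "finite N" "e \<in> hedges N"
  shows "dgrad N (\<lambda>T. \<Sum>j<card T. c j) e = (c (card (fst e)) :: real)"
proof -
  obtain i S where e: "e = (S, insert i S)" "i \<in> N" "S \<subseteq> N - {i}" using assms(2) unfolding hedges_def by auto
  have "finite S" using assms(1) e(3) finite_subset by blast
  moreover have "i \<notin> S" using e by auto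
  ultimately have "card (insert i S) = Suc (card S)" by simp
  then show ?thesis using assms(2) unfolding dgrad_def e(1) by simp
qed

theorem mainTheorem3:
  fixes N S :: "'a set" and i :: 'a and u :: "'a set \<Rightarrow> real"
  assumes "finite N" and "i \<in> N" and "S \<subseteq> N - {i}"
    and "dgrad N u = projP N (edge_ind (S, insert i S))"
    and "u {} = 0"
  shows "u N = fact (card S) * fact (card N - 1 - card S) / fact (card N)"
proof -
  define n where "n = card N"
  define c :: "nat \<Rightarrow> real" where "c k = fact k * fact (n - 1 - k) / fact n" for k
  define phi where "phi = (\<lambda>T::'a set. \<Sum>j<card T. c j)"
  define \<chi> where "\<chi> = edge_ind (S, insert i S)"
  have n1: "n \<ge> 1" unfolding n_def using assms(1,2) by (metis One_nat_def Suc_leI card_gt_0_iff empty_iff)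
  have e0: "(S, insert i S) \<in> hedges N" unfolding hedges_def using assms(2,3) by blast
  have "\<forall>h\<in>range_d N. innerE N (\<lambda>e. \<chi> e - projP N \<chi> e) h = 0"
    using projP_prop[OF assms(1)] by blast
  moreover have "dgrad N phi \<in> range_d N" unfolding range_d_def by blast
  ultimately have "innerE N (\<lambda>e. \<chi> e - dgrad N u e) (dgrad N phi) = 0"
    using assms(4) unfolding \<chi>_def by simp
  hence orth: "innerE N \<chi> (dgrad N phi) = innerE N (dgrad N u) (dgrad N phi)"
    by (simp add: innerE_diff_left)
  have lhs: "innerE N \<chi> (dgrad N phi) = c (card S)"
  proof -
    have "innerE N \<chi> (dgrad N phi) = (\<Sum>e\<in>hedges N. if e = (S, insert i S) then dgrad N phi (S, insert i S) else 0)"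
      unfolding innerE_def \<chi>_def edge_ind_def by (rule sum.cong) auto
    also have "\<dots> = dgrad N phi (S, insert i S)" using e0 finite_hedges[OF assms(1)] by simp
    also have "\<dots> = c (card S)" unfolding phi_def using dgrad_phi[OF assms(1) e0] by simp
    finally show ?thesis .
  qed
  define \<kappa> where "\<kappa> k = real k * c (k - 1) - real (n - k) * c k" for k
  have rhs1: "innerE N (dgrad N u) (dgrad N phi) = (\<Sum>T\<in>Pow N. u T * \<kappa> (card T))"
  proof -
    have "innerE N (dgrad N u) (dgrad N phi) = (\<Sum>e\<in>hedges N. u (snd e) * c (card (fst e)) - u (fst e) * c (card (fst e)))"
      unfolding innerE_def phi_def
      by (rule sum.cong, simp, subst dgrad_phi[OF assms(1)], simp, simp add: dgrad_def algebra_simps)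
    also have "\<dots> = (\<Sum>e\<in>hedges N. u (snd e) * c (card (fst e))) - (\<Sum>e\<in>hedges N. u (fst e) * c (card (fst e)))"
      by (simp add: sum_subtractf)
    also have "(\<Sum>e\<in>hedges N. u (snd e) * c (card (fst e))) = (\<Sum>T\<in>Pow N. u T * (real (card T) * c (card T - 1)))"
    proof -
      have "(\<Sum>e\<in>hedges N. u (snd e) * c (card (fst e))) = (\<Sum>T\<in>Pow N. \<Sum>j\<in>T. u T * c (card (T - {j})))"
        by (simp only: sum_hedges1[OF assms(1)] fst_conv snd_conv)
      also have "\<dots> = (\<Sum>T\<in>Pow N. u T * (real (card T) * c (card T - 1)))"
      proof (rule sum.cong)
        fix T assume "T \<in> Pow N"
        hence fT: "finite T" using assms(1) finite_subset by auto
        have "(\<Sum>j\<in>T. u T * c (card (T - {j}))) = (\<Sum>j\<in>T. u T * c (card T - 1))"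
          by (rule sum.cong) (auto simp: fT)
        then show "(\<Sum>j\<in>T. u T * c (card (T - {j}))) = u T * (real (card T) * c (card T - 1))"
          by simp
      qed simp
      finally show ?thesis .
    qed
    also have "(\<Sum>e\<in>hedges N. u (fst e) * c (card (fst e))) = (\<Sum>T\<in>Pow N. u T * (real (n - card T) * c (card T)))"
    proof -
      have "(\<Sum>e\<in>hedges N. u (fst e) * c (card (fst e))) = (\<Sum>T\<in>Pow N. \<Sum>j\<in>N - T. u T * c (card T))"
        by (simp only: sum_hedges2[OF assms(1)] fst_conv snd_conv)
      also have "\<dots> = (\<Sum>T\<in>Pow N. u T * (real (n - card T) * c (card T)))"
      proof (rule sum.cong)
        fix T assume "T \<in> Pow N"
        hence "card (N - T) = n - card T" unfolding n_def using assms(1)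
          by (simp add: card_Diff_subset finite_subset)
        then show "(\<Sum>j\<in>N - T. u T * c (card T)) = u T * (real (n - card T) * c (card T))"
          by simp
      qed simp
      finally show ?thesis .
    qed
    finally show ?thesis unfolding \<kappa>_def by (simp only: right_diff_distrib sum_subtractf)
  qed
  have k0: "\<kappa> 0 = -1" unfolding \<kappa>_def c_def using n1
    by (simp add: fact_reduce[of n])
  have kn: "\<kappa> n = 1" unfolding \<kappa>_def c_def using n1
    by (simp add: fact_reduce[of n])
  have kmid: "\<kappa> k = 0" if "0 < k" "k < n" for k
  proof -
    have a: "real k * fact (k - 1) = fact k" using that by (simp add: fact_reduce[of k])
    have b: "real (n - k) * fact (n - 1 - k) = fact (n - k)"
    proof -
      have "n - k = Suc (n - 1 - k)" using that by simp
      then show ?thesis by (metis fact_Suc of_nat_fact)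
    qed
    have "real k * c (k - 1) = fact k * fact (n - k) / fact n"
      unfolding c_def using that a by (simp add: Suc_diff_Suc)
    moreover have "real (n - k) * c k = fact k * fact (n - k) / fact n"
      unfolding c_def using b by (simp add: algebra_simps)
    ultimately show ?thesis unfolding \<kappa>_def by simp
  qed
  have Nne: "N \<noteq> {}" using assms(2) by auto
  have "(\<Sum>T\<in>Pow N. u T * \<kappa> (card T)) = (\<Sum>T\<in>Pow N. (if T = N then u N else 0) + (if T = {} then - u {} else 0))"
  proof (rule sum.cong)
    fix T assume T: "T \<in> Pow N"
    show "u T * \<kappa> (card T) = (if T = N then u N else 0) + (if T = {} then - u {} else 0)"
    proof (cases "T = N")
      case True then show ?thesis using kn Nne n_def by simp
    next
      case False
      show ?thesis
      proof (cases "T = {}")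
        case True then show ?thesis using k0 Nne by simp
      next
        case F2: False
        have fT: "finite T" using T assms(1) finite_subset by auto
        have "card T < n" unfolding n_def using T False assms(1)
          by (simp add: psubset_card_mono psubset_eq)
        moreover have "0 < card T" using fT F2 by (simp add: card_gt_0_iff)
        ultimately show ?thesis using kmid False F2 by simp
      qed
    qed
  qed simp
  also have "\<dots> = u N - u {}" using assms(1) Nne by (simp add: sum.distrib)
  finally have "innerE N (dgrad N u) (dgrad N phi) = u N - u {}" using rhs1 by simp
  then have "u N = c (card S)" using orth lhs assms(5) by simp
  then show ?thesis unfolding c_def n_def .
qed

end
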